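(* Let $G_1$ and $G_2$ be two vertex-disjoint simple connected graphs with $|V(G_1)|=n_1$, $|V(G_2)|=n_2$, $|E(G_1)|=m_1$, $|E(G_2)|=m_2$. Then the vertex Q-join $G_1\dot{\vee}_Q G_2$ satisfies \[ F(G_1\dot{\vee}_Q G_2)=F(G_1)+F(G_2)+3n_2M_1(G_1)+3n_1M_1(G_2)+M_4(G_1)+3\,ReZM(G_1)+6m_1n_2^{2}+6m_2n_1^{2}+n_1n_2(n_1^2+n_2^2). \]
   Context: For a simple graph $G$ and $v\in V(G)$, $d_G(v)$ is the degree of $v$. Define $M_1(G)=\sum_{v\in V(G)}d_G(v)^2$, $F(G)=\sum_{v\in V(G)}d_G(v)^3$, $M_4(G)=\sum_{v\in V(G)}d_G(v)^4$, and $ReZM(G)=\sum_{uv\in E(G)}d_G(u)d_G(v)\,[d_G(u)+d_G(v)]$. The graph $Q(G)$ is obtained from $G$ by inserting a new vertex into each edge of $G$ (subdividing it) and then joining by an edge each pair of new vertices that lie on adjacent edges of $G$ (edges sharing an end vertex); let $I(G)$ denote the set of these new vertices, so $V(Q(G))=V(G)\cup I(G)$. The vertex Q-join $G_1\dot{\vee}_Q G_2$ is the graph obtained from $Q(G_1)$ and $G_2$ (taken vertex-disjoint) by joining each vertex of $V(G_1)$ to every vertex of $G_2$ by an edge. *)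

theory Defs
  imports Main
begin

definition simple_graph :: "'a set \<Rightarrow> 'a set set \<Rightarrow> bool" where
  "simple_graph V E \<longleftrightarrow> finite V \<and>
     (\<forall>e\<in>E. \<exists>u v. u \<in> V \<and> v \<in> V \<and> u \<noteq> v \<and> e = {u, v})"

definition adj_rel :: "'a set set \<Rightarrow> ('a \<times> 'a) set" where
  "adj_rel E = {(u, v). {u, v} \<in> E}"

definition connected_graph :: "'a set \<Rightarrow> 'a set set \<Rightarrow> bool" where
  "connected_graph V E \<longleftrightarrow> V \<noteq> {} \<and> (\<forall>u\<in>V. \<forall>v\<in>V. (u, v) \<in> (adj_rel E)\<^sup>*)"

definition degree :: "'a set set \<Rightarrow> 'a \<Rightarrow> nat" where
  "degree E v = card {e \<in> E. v \<in> e}"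

definition M1 :: "'a set \<Rightarrow> 'a set set \<Rightarrow> nat" where
  "M1 V E = (\<Sum>v\<in>V. degree E v ^ 2)"

definition Fidx :: "'a set \<Rightarrow> 'a set set \<Rightarrow> nat" where
  "Fidx V E = (\<Sum>v\<in>V. degree E v ^ 3)"

definition M4 :: "'a set \<Rightarrow> 'a set set \<Rightarrow> nat" where
  "M4 V E = (\<Sum>v\<in>V. degree E v ^ 4)"

definition ReZM :: "'a set \<Rightarrow> 'a set set \<Rightarrow> nat" where
  "ReZM V E = (\<Sum>e\<in>E. (\<Prod>x\<in>e. degree E x) * (\<Sum>x\<in>e. degree E x))"

text \<open>Q(G): old vertices tagged Inl, new (edge) vertices tagged Inr.\<close>
definition Q_vertices :: "'a set \<Rightarrow> 'a set set \<Rightarrow> ('a + 'a set) set" where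
  "Q_vertices V E = Inl ` V \<union> Inr ` E"

definition Q_edges :: "'a set \<Rightarrow> 'a set set \<Rightarrow> ('a + 'a set) set set" where
  "Q_edges V E =
     {{Inl u, Inr e} | u e. e \<in> E \<and> u \<in> e} \<union>
     {{Inr e, Inr f} | e f. e \<in> E \<and> f \<in> E \<and> e \<noteq> f \<and> e \<inter> f \<noteq> {}}"

definition vQjoin_vertices :: "'a set \<Rightarrow> 'a set set \<Rightarrow> 'b set \<Rightarrow> (('a + 'a set) + 'b) set" where
  "vQjoin_vertices V1 E1 V2 = Inl ` Q_vertices V1 E1 \<union> Inr ` V2"

definition vQjoin_edges :: "'a set \<Rightarrow> 'a set set \<Rightarrow> 'b set \<Rightarrow> 'b set set
     \<Rightarrow> (('a + 'a set) + 'b) set set" where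
  "vQjoin_edges V1 E1 V2 E2 =
     (\<lambda>e. Inl ` e) ` Q_edges V1 E1 \<union> (\<lambda>e. Inr ` e) ` E2 \<union>
     {{Inl (Inl u), Inr w} | u w. u \<in> V1 \<and> w \<in> V2}"

end

theory Submission
  imports Defs
begin

lemma fin_V: "simple_graph V E \<Longrightarrow> finite V"
  unfolding simple_graph_def by (rule conjunct1)

lemma edge_form:
  assumes "simple_graph V E" "e \<in> E"
  obtains u v where "u \<in> V" "v \<in> V" "u \<noteq> v" "e = {u, v}"
proof -
  have "\<forall>e\<in>E. \<exists>u v. u \<in> V \<and> v \<in> V \<and> u \<noteq> v \<and> e = {u, v}"
    using assms(1) unfolding simple_graph_def by (rule conjunct2)
  then have "\<exists>u v. u \<in> V \<and> v \<in> V \<and> u \<noteq> v \<and> e = {u, v}" using assms(2) by (rule bspec)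
  then show ?thesis using that by (elim exE conjE)
qed

lemma sub_V: assumes "simple_graph V E" "e \<in> E" shows "e \<subseteq> V"
proof -
  obtain u v where "u \<in> V" "v \<in> V" "e = {u, v}" using edge_form[OF assms] by blast
  then show ?thesis by simp
qed

lemma fin_E: "simple_graph V E \<Longrightarrow> finite E"
proof -
  assume a: "simple_graph V E"
  hence "E \<subseteq> Pow V" using sub_V by blast
  moreover have "finite V" using a by (rule fin_V)
  ultimately show ?thesis by (meson finite_Pow_iff finite_subset)
qed

lemma card_e: assumes "simple_graph V E" "e \<in> E" shows "card e = 2"
proof -
  obtain u v where "u \<noteq> v" "e = {u, v}" using edge_form[OF assms] by blast
  then show ?thesis by simp
qed

lemma X1: "finite (V::'a set) \<Longrightarrow> e \<subseteq> V \<Longrightarrow> (\<Sum>x\<in>e. g x) = (\<Sum>x\<in>V. if x \<in> e then g x else (0::nat))"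
proof -
  assume fV: "finite V" and s: "e \<subseteq> V"
  have eqe: "{x\<in>V. x \<in> e} = e" using s by blast
  show ?thesis using sum.inter_filter[OF fV, of g "\<lambda>x. x \<in> e"] unfolding eqe .
qed

lemma X2: "finite E \<Longrightarrow> (\<Sum>e\<in>E. if x \<in> e then g x else (0::nat)) = degree E x * g x"
proof -
  assume fE: "finite E"
  have "(\<Sum>e\<in>E. if x \<in> e then g x else (0::nat)) = (\<Sum>e\<in>{e\<in>E. x \<in> e}. g x)"
    using sum.inter_filter[OF fE, of "\<lambda>_. g x" "\<lambda>e. x \<in> e"] by simp
  also have "\<dots> = degree E x * g x" unfolding degree_def by simp
  finally show ?thesis .
qed

lemma double_count:
  assumes "simple_graph V E"
  shows "(\<Sum>e\<in>E. \<Sum>x\<in>e. g x) = (\<Sum>v\<in>V. degree E v * (g v :: nat))"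
proof -
  have fV: "finite V" using assms by (rule fin_V)
  have fE: "finite E" using fin_E assms .
  have "(\<Sum>e\<in>E. \<Sum>x\<in>e. g x) = (\<Sum>e\<in>E. \<Sum>x\<in>V. if x \<in> e then g x else 0)"
    by (rule sum.cong[OF refl], rule X1[OF fV], rule sub_V[OF assms])
  also have "\<dots> = (\<Sum>x\<in>V. \<Sum>e\<in>E. if x \<in> e then g x else 0)" by (rule sum.swap)
  also have "\<dots> = (\<Sum>v\<in>V. degree E v * g v)"
    by (rule sum.cong[OF refl], rule X2[OF fE])
  finally show ?thesis .
qed

lemma handshake:
  assumes "simple_graph V E"
  shows "(\<Sum>v\<in>V. degree E v) = 2 * card E"
proof -
  have "(\<Sum>v\<in>V. degree E v) = (\<Sum>v\<in>V. degree E v * 1)" by simp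
  also have "\<dots> = (\<Sum>e\<in>E. \<Sum>x\<in>e. (1::nat))" by (rule double_count[OF assms, symmetric])
  also have "\<dots> = (\<Sum>e\<in>E. 2)"
    by (rule sum.cong[OF refl]) (simp add: card_e[OF assms])
  also have "\<dots> = 2 * card E" by simp
  finally show ?thesis .
qed

lemma deg_old:
  assumes g1: "simple_graph V1 E1" and g2: "simple_graph V2 E2" and u: "u \<in> V1"
  shows "degree (vQjoin_edges V1 E1 V2 E2) (Inl (Inl u)) = degree E1 u + card V2"
proof -
  let ?A = "(\<lambda>e. {Inl (Inl u), Inl (Inr e)}) ` {e\<in>E1. u\<in>e} :: (('a + 'a set) + 'b) set set"
  let ?B = "(\<lambda>w. {Inl (Inl u), Inr w}) ` V2 :: (('a + 'a set) + 'b) set set"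
  have eq: "{x \<in> vQjoin_edges V1 E1 V2 E2. Inl (Inl u) \<in> x} = ?A \<union> ?B"
  proof (rule set_eqI, rule iffI)
    fix x assume "x \<in> {x \<in> vQjoin_edges V1 E1 V2 E2. Inl (Inl u) \<in> x}"
    then show "x \<in> ?A \<union> ?B"
      unfolding vQjoin_edges_def Q_edges_def by (auto simp: image_iff)
  next
    fix x assume "x \<in> ?A \<union> ?B"
    then show "x \<in> {x \<in> vQjoin_edges V1 E1 V2 E2. Inl (Inl u) \<in> x}"
    proof
      assume "x \<in> ?A"
      then obtain e where e: "e \<in> E1" "u \<in> e" "x = {Inl (Inl u), Inl (Inr e)}" by auto
      have "{Inl u, Inr e} \<in> Q_edges V1 E1" unfolding Q_edges_def using e by blast
      moreover have "x = Inl ` {Inl u, Inr e}" using e by simp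
      ultimately have "x \<in> (\<lambda>e. Inl ` e) ` Q_edges V1 E1" by blast
      then show ?thesis unfolding vQjoin_edges_def using e by auto
    next
      assume "x \<in> ?B"
      then show ?thesis unfolding vQjoin_edges_def using u by auto
    qed
  qed
  have fE: "finite E1" using fin_E g1 .
  have fV2: "finite V2" using g2 by (rule fin_V)
  have dis: "?A \<inter> ?B = {}" by auto
  have cA: "card ?A = degree E1 u" unfolding degree_def
    by (rule card_image) (auto simp: inj_on_def doubleton_eq_iff)
  have cB: "card ?B = card V2"
    by (rule card_image) (auto simp: inj_on_def doubleton_eq_iff)
  show ?thesis unfolding degree_def eq
    using card_Un_disjoint[OF _ _ dis] fE fV2 cA cB unfolding degree_def by simp
qed

lemma deg_G2:
  assumes g1: "simple_graph V1 E1" and g2: "simple_graph V2 E2" and w: "w \<in> V2"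
  shows "degree (vQjoin_edges V1 E1 V2 E2) (Inr w) = degree E2 w + card V1"
proof -
  let ?A = "(\<lambda>e. Inr ` e) ` {e\<in>E2. w\<in>e} :: (('a + 'a set) + 'b) set set"
  let ?B = "(\<lambda>u. {Inl (Inl u), Inr w}) ` V1 :: (('a + 'a set) + 'b) set set"
  have eq: "{x \<in> vQjoin_edges V1 E1 V2 E2. Inr w \<in> x} = ?A \<union> ?B"
  proof (rule set_eqI, rule iffI)
    fix x assume "x \<in> {x \<in> vQjoin_edges V1 E1 V2 E2. Inr w \<in> x}"
    then show "x \<in> ?A \<union> ?B"
      unfolding vQjoin_edges_def Q_edges_def by (auto simp: image_iff)
  next
    fix x assume "x \<in> ?A \<union> ?B"
    then show "x \<in> {x \<in> vQjoin_edges V1 E1 V2 E2. Inr w \<in> x}"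
      unfolding vQjoin_edges_def using w by auto
  qed
  have fE: "finite E2" using fin_E g2 .
  have fV1: "finite V1" using g1 by (rule fin_V)
  have dis: "?A \<inter> ?B = {}" by auto
  have cA: "card ?A = degree E2 w" unfolding degree_def
    by (rule card_image) (auto simp: inj_on_def inj_image_eq_iff)
  have cB: "card ?B = card V1"
    by (rule card_image) (auto simp: inj_on_def doubleton_eq_iff)
  show ?thesis unfolding degree_def eq
    using card_Un_disjoint[OF _ _ dis] fE fV1 cA cB unfolding degree_def by simp
qed

lemma deg_new:
  assumes g1: "simple_graph V1 E1" and e: "e \<in> E1"
  shows "degree (vQjoin_edges V1 E1 V2 E2) (Inl (Inr e)) = (\<Sum>x\<in>e. degree E1 x)"
proof -
  obtain a b where ab: "a \<in> V1" "b \<in> V1" "a \<noteq> b" "e = {a, b}"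
    using g1 e by (rule edge_form)
  have fE: "finite E1" using fin_E g1 .
  let ?S = "{f\<in>E1. f \<noteq> e \<and> f \<inter> e \<noteq> {}}"
  let ?A = "(\<lambda>y. {Inl (Inl y), Inl (Inr e)}) ` e :: (('a + 'a set) + 'b) set set"
  let ?B = "(\<lambda>f. {Inl (Inr e), Inl (Inr f)}) ` ?S :: (('a + 'a set) + 'b) set set"
  have eq: "{x \<in> vQjoin_edges V1 E1 V2 E2. Inl (Inr e) \<in> x} = ?A \<union> ?B"
  proof (rule set_eqI, rule iffI)
    fix x assume x: "x \<in> {x \<in> vQjoin_edges V1 E1 V2 E2. Inl (Inr e) \<in> x}"
    then have xD: "x \<in> vQjoin_edges V1 E1 V2 E2" and xe: "Inl (Inr e) \<in> x" by auto
    from xD consider (q) q where "q \<in> Q_edges V1 E1" "x = Inl ` q"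
      | (r) r where "x = Inr ` r" | (j) u w where "x = {Inl (Inl u), Inr w}"
      unfolding vQjoin_edges_def by blast
    then show "x \<in> ?A \<union> ?B"
    proof cases
      case (q q)
      have qe: "Inr e \<in> q" using q xe by auto
      from q(1) consider (a) u f where "q = {Inl u, Inr f}" "f \<in> E1" "u \<in> f"
        | (b) f g where "q = {Inr f, Inr g}" "f \<in> E1" "g \<in> E1" "f \<noteq> g" "f \<inter> g \<noteq> {}"
        unfolding Q_edges_def by blast
      then show ?thesis
      proof cases
        case (a u f)
        then have "f = e" using qe by auto
        then have "x = {Inl (Inl u), Inl (Inr e)}" using q a by simp
        moreover have "u \<in> e" using a \<open>f = e\<close> by simp
        ultimately show ?thesis by blast
      next
        case (b f g)
        then have "e = f \<or> e = g" using qe by auto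
        then show ?thesis
        proof
          assume "e = f"
          then have "g \<in> ?S" using b by blast
          moreover have "x = {Inl (Inr e), Inl (Inr g)}" using q b \<open>e = f\<close> by simp
          ultimately show ?thesis by blast
        next
          assume "e = g"
          then have "f \<in> ?S" using b by blast
          moreover have "x = {Inl (Inr e), Inl (Inr f)}" using q b \<open>e = g\<close> by auto
          ultimately show ?thesis by blast
        qed
      qed
    next
      case (r r) then show ?thesis using xe by auto
    next
      case (j u w) then show ?thesis using xe by auto
    qed
  next
    fix x assume "x \<in> ?A \<union> ?B"
    then show "x \<in> {x \<in> vQjoin_edges V1 E1 V2 E2. Inl (Inr e) \<in> x}"
    proof
      assume "x \<in> ?A"
      then obtain y where y: "y \<in> e" "x = {Inl (Inl y), Inl (Inr e)}" by auto
      have "{Inl y, Inr e} \<in> Q_edges V1 E1" unfolding Q_edges_def using y e by blast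
      moreover have "x = Inl ` {Inl y, Inr e}" using y by simp
      ultimately have "x \<in> (\<lambda>e. Inl ` e) ` Q_edges V1 E1" by blast
      then show ?thesis unfolding vQjoin_edges_def using y by auto
    next
      assume "x \<in> ?B"
      then obtain f where f: "f \<in> ?S" "x = {Inl (Inr e), Inl (Inr f)}" by auto
      have "{Inr e, Inr f} \<in> Q_edges V1 E1" unfolding Q_edges_def using f e by blast
      moreover have "x = Inl ` {Inr e, Inr f}" using f by simp
      ultimately have "x \<in> (\<lambda>e. Inl ` e) ` Q_edges V1 E1" by blast
      then show ?thesis unfolding vQjoin_edges_def using f by auto
    qed
  qed
  have dis: "?A \<inter> ?B = {}" by auto
  have fS: "finite ?S" using fE by simp
  have fe: "finite e" using ab by simp
  have cA: "card ?A = 2"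
    using ab by (subst card_image) (auto simp: inj_on_def doubleton_eq_iff)
  have cB: "card ?B = card ?S"
    by (rule card_image) (auto simp: inj_on_def doubleton_eq_iff)
  let ?Da = "{f\<in>E1. a \<in> f}" and ?Db = "{f\<in>E1. b \<in> f}"
  have Sdef: "?S = (?Da \<union> ?Db) - {e}" using ab by auto
  have int: "?Da \<inter> ?Db = {e}"
  proof
    show "?Da \<inter> ?Db \<subseteq> {e}"
    proof
      fix f assume f: "f \<in> ?Da \<inter> ?Db"
      then have "f \<in> E1" by simp
      then obtain c d where "f = {c, d}" using edge_form[OF g1 \<open>f \<in> E1\<close>] by blast
      then show "f \<in> {e}" using f ab by auto
    qed
    show "{e} \<subseteq> ?Da \<inter> ?Db" using e ab by auto
  qed
  have cU: "card (?Da \<union> ?Db) + 1 = degree E1 a + degree E1 b"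
    using card_Un_Int[of ?Da ?Db] fE int unfolding degree_def by simp
  have eU: "e \<in> ?Da \<union> ?Db" using e ab by auto
  have fU: "finite (?Da \<union> ?Db)" using fE by simp
  have cS1: "card ?S = card (?Da \<union> ?Db) - 1"
    unfolding Sdef using card_Diff_singleton[OF eU] by simp
  have "card (?Da \<union> ?Db) > 0" using fU eU card_gt_0_iff by blast
  hence cS: "card ?S + 2 = degree E1 a + degree E1 b" using cS1 cU by simp
  have "degree (vQjoin_edges V1 E1 V2 E2) (Inl (Inr e)) = card ?A + card ?B"
    unfolding degree_def eq using card_Un_disjoint[OF _ _ dis] fe fS by simp
  also have "\<dots> = degree E1 a + degree E1 b" using cA cB cS by simp
  also have "\<dots> = (\<Sum>x\<in>e. degree E1 x)" using ab by simp
  finally show ?thesis .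
qed


lemma cube_exp: "((d::nat) + n) ^ 3 = d^3 + 3 * n * d^2 + 3 * n^2 * d + n^3"
  by (simp add: power2_eq_square power3_eq_cube algebra_simps)

lemma sum_shift:
  assumes "simple_graph V E"
  shows "(\<Sum>v\<in>V. (degree E v + n) ^ 3) =
     Fidx V E + 3 * n * M1 V E + 6 * card E * n ^ 2 + card V * n ^ 3"
proof -
  have "(\<Sum>v\<in>V. (degree E v + n) ^ 3) = (\<Sum>v\<in>V. degree E v ^ 3) + 3 * n * (\<Sum>v\<in>V. degree E v ^ 2)
      + 3 * n^2 * (\<Sum>v\<in>V. degree E v) + card V * n ^ 3"
    by (simp add: cube_exp sum.distrib sum_distrib_left)
  then show ?thesis using handshake[OF assms] unfolding Fidx_def M1_def by simp
qed

lemma edge_part: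
  assumes g: "simple_graph V E"
  shows "(\<Sum>e\<in>E. (\<Sum>x\<in>e. degree E x) ^ 3) = M4 V E + 3 * ReZM V E"
proof -
  have "(\<Sum>e\<in>E. (\<Sum>x\<in>e. degree E x) ^ 3) =
     (\<Sum>e\<in>E. (\<Sum>x\<in>e. degree E x ^ 3) + 3 * ((\<Prod>x\<in>e. degree E x) * (\<Sum>x\<in>e. degree E x)))"
  proof (rule sum.cong[OF refl])
    fix e assume "e \<in> E"
    then obtain a b where "a \<noteq> b" "e = {a, b}" using edge_form[OF g \<open>e \<in> E\<close>] by blast
    then show "(\<Sum>x\<in>e. degree E x) ^ 3 = (\<Sum>x\<in>e. degree E x ^ 3) + 3 * ((\<Prod>x\<in>e. degree E x) * (\<Sum>x\<in>e. degree E x))"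
      by (simp add: power3_eq_cube algebra_simps)
  qed
  also have "\<dots> = (\<Sum>e\<in>E. \<Sum>x\<in>e. degree E x ^ 3) + 3 * ReZM V E"
    by (simp add: sum.distrib sum_distrib_left ReZM_def)
  also have "(\<Sum>e\<in>E. \<Sum>x\<in>e. degree E x ^ 3) = M4 V E"
    unfolding double_count[OF g] M4_def by (simp add: power_numeral_reduce)
  finally show ?thesis .
qed

theorem theorem5:
  fixes V1 :: "'a set" and E1 :: "'a set set" and V2 :: "'b set" and E2 :: "'b set set"
  assumes "simple_graph V1 E1" and "connected_graph V1 E1"
    and "simple_graph V2 E2" and "connected_graph V2 E2"
  defines "n1 \<equiv> card V1" and "n2 \<equiv> card V2" and "m1 \<equiv> card E1" and "m2 \<equiv> card E2"
  shows "Fidx (vQjoin_vertices V1 E1 V2) (vQjoin_edges V1 E1 V2 E2) =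
    Fidx V1 E1 + Fidx V2 E2 + 3 * n2 * M1 V1 E1 + 3 * n1 * M1 V2 E2 + M4 V1 E1
    + 3 * ReZM V1 E1 + 6 * m1 * n2 ^ 2 + 6 * m2 * n1 ^ 2 + n1 * n2 * (n1 ^ 2 + n2 ^ 2)"
proof -
  note g1 = assms(1) and g2 = assms(3)
  let ?D = "vQjoin_edges V1 E1 V2 E2"
  let ?f = "\<lambda>v. degree ?D v ^ 3"
  have fV1: "finite V1" using g1 by (rule fin_V)
  have fV2: "finite V2" using g2 by (rule fin_V)
  have fE1: "finite E1" using fin_E g1 .
  have VV: "vQjoin_vertices V1 E1 V2 = (Inl ` Inl ` V1 \<union> Inl ` Inr ` E1) \<union> Inr ` V2"
    unfolding vQjoin_vertices_def Q_vertices_def by (simp add: image_Un)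
  have "Fidx (vQjoin_vertices V1 E1 V2) ?D = sum ?f (Inl ` Inl ` V1) + sum ?f (Inl ` Inr ` E1) + sum ?f (Inr ` V2)"
    unfolding Fidx_def VV
    by (subst sum.union_disjoint, use fV1 fV2 fE1 in auto)+
  also have "sum ?f (Inl ` Inl ` V1) = (\<Sum>u\<in>V1. (degree E1 u + n2) ^ 3)"
    by (subst sum.reindex, simp add: inj_on_def, subst sum.reindex, simp add: inj_on_def)
       (simp add: deg_old[OF g1 g2] n2_def)
  also have "sum ?f (Inl ` Inr ` E1) = (\<Sum>e\<in>E1. (\<Sum>x\<in>e. degree E1 x) ^ 3)"
    by (subst sum.reindex, simp add: inj_on_def, subst sum.reindex, simp add: inj_on_def)
       (simp add: deg_new[OF g1])
  also have "sum ?f (Inr ` V2) = (\<Sum>w\<in>V2. (degree E2 w + n1) ^ 3)"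
    by (subst sum.reindex, simp add: inj_on_def) (simp add: deg_G2[OF g1 g2] n1_def)
  finally show ?thesis
    unfolding sum_shift[OF g1] sum_shift[OF g2] edge_part[OF g1]
    unfolding n1_def n2_def m1_def m2_def
    by (simp add: algebra_simps power2_eq_square power3_eq_cube)
qed

end
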